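(* Let $n,d\ge1$, $p\ge d$, $\Delta\in\mathbb{R}^{nd\times nd}$, $\delta>0$, $Z^{\top}=[I_d,\dots,I_d]\in\mathbb{R}^{d\times nd}$, and let $S\in\mathbb{R}^{nd\times p}$ have blocks $S_i$ with $S_iS_i^{\top}=I_d$. If $d_F(S,Z)\le\delta\sqrt{d/n}\,\|\Delta\|_{\mathrm{op}}$, then \[ n\ge\sigma_{\max}(Z^{\top}S)\ge\sigma_{\min}(Z^{\top}S)\ge n-\frac{\delta^2d\|\Delta\|_{\mathrm{op}}^2}{2n}. \]
   Context: $Z^{\top}S=\sum_jS_j\in\mathbb{R}^{d\times p}$; $\sigma_{\max},\sigma_{\min}$ denote its largest and $d$-th (smallest of the $d$) singular values. $d_F(S,Z)=\min\{(\sum_i\|S_i-Q\|_F^2)^{1/2}:Q\in\mathbb{R}^{d\times p},QQ^{\top}=I_d\}$. *)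

theory Defs
  imports "HOL-Analysis.Analysis"
begin

definition frob :: "real^'p^'d \<Rightarrow> real" where
  "frob M = sqrt (\<Sum>i\<in>UNIV. \<Sum>j\<in>UNIV. (M $ i $ j)\<^sup>2)"

definition sq_singular_values :: "real^'p^'d \<Rightarrow> real set" where
  "sq_singular_values M =
     {e. \<exists>v::real^'d. v \<noteq> 0 \<and> (M ** transpose M) *v v = e *\<^sub>R v}"

definition singular_values :: "real^'p^'d \<Rightarrow> real set" where
  "singular_values M = sqrt ` sq_singular_values M"

definition sigma_max :: "real^'p^'d \<Rightarrow> real" where
  "sigma_max M = Max (singular_values M)"

definition sigma_min :: "real^'p^'d \<Rightarrow> real" where
  "sigma_min M = Min (singular_values M)"

text \<open>d_F(S,Z) for S given by its n blocks S 0, ..., S (n-1).\<close>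
definition dF :: "nat \<Rightarrow> (nat \<Rightarrow> real^'p^'d) \<Rightarrow> real" where
  "dF n S = Inf {sqrt (\<Sum>i<n. (frob (S i - Q))\<^sup>2) | Q. Q ** transpose Q = mat 1}"

end

theory Submission
  imports Defs
begin

lemma inner_mv:
  fixes A :: "real^'n^'m"
  shows "(A *v x) \<bullet> y = x \<bullet> (transpose A *v y)"
proof -
  have "(A *v x) \<bullet> y = (\<Sum>i\<in>UNIV. \<Sum>j\<in>UNIV. A $ i $ j * x $ j * y $ i)"
    by (simp add: inner_vec_def matrix_vector_mult_def sum_distrib_right)
  also have "\<dots> = (\<Sum>j\<in>UNIV. \<Sum>i\<in>UNIV. A $ i $ j * x $ j * y $ i)" by (rule sum.swap)
  also have "\<dots> = x \<bullet> (transpose A *v y)"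
    by (simp add: inner_vec_def matrix_vector_mult_def transpose_def sum_distrib_left ac_simps)
  finally show ?thesis .
qed

lemma transpose_sum_mv:
  fixes S :: "nat \<Rightarrow> real^'p^'d"
  shows "transpose (\<Sum>i<n. S i) *v v = (\<Sum>i<n. transpose (S i) *v v)"
proof -
  have "(transpose (\<Sum>i<n. S i) *v v) $ j = (\<Sum>i<n. transpose (S i) *v v) $ j" for j
  proof -
    have "(transpose (\<Sum>i<n. S i) *v v) $ j = (\<Sum>k\<in>UNIV. \<Sum>i<n. S i $ k $ j * v $ k)"
      by (simp add: matrix_vector_mult_def transpose_def sum_component sum_distrib_right del: transpose_matrix_vector)
    also have "\<dots> = (\<Sum>i<n. \<Sum>k\<in>UNIV. S i $ k $ j * v $ k)" by (rule sum.swap)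
    also have "\<dots> = (\<Sum>i<n. transpose (S i) *v v) $ j"
      by (simp add: matrix_vector_mult_def transpose_def sum_component del: transpose_matrix_vector)
    finally show ?thesis .
  qed
  thus ?thesis by (simp add: vec_eq_iff del: transpose_matrix_vector)
qed

lemma transpose_diff_mv:
  fixes A B :: "real^'p^'d"
  shows "transpose (A - B) *v v = transpose A *v v - transpose B *v v"
  by (simp add: vec_eq_iff matrix_vector_mult_def transpose_def sum_subtractf left_diff_distrib)

lemma iso_norm:
  fixes S :: "real^'p^'d"
  assumes "S ** transpose S = mat 1"
  shows "norm (transpose S *v v) = norm v"
proof -
  have "(transpose S *v v) \<bullet> (transpose S *v v) = v \<bullet> (S *v (transpose S *v v))"
    using inner_mv[of "transpose S" v] by simp
  also have "\<dots> = v \<bullet> v" by (simp only: matrix_vector_mul_assoc assms matrix_vector_mul_lid)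
  finally show ?thesis by (simp add: norm_eq_sqrt_inner)
qed

lemma frob_bound:
  fixes A :: "real^'p^'d"
  assumes "norm v = 1"
  shows "(norm (transpose A *v v))\<^sup>2 \<le> (frob A)\<^sup>2"
proof -
  have vv: "v \<bullet> v = 1" using assms by (simp add: norm_eq_1)
  have fr: "(frob A)\<^sup>2 = (\<Sum>j\<in>UNIV. \<Sum>k\<in>UNIV. (A $ k $ j)\<^sup>2)"
  proof -
    have "(frob A)\<^sup>2 = (\<Sum>i\<in>UNIV. \<Sum>j\<in>UNIV. (A $ i $ j)\<^sup>2)"
      unfolding frob_def by (rule real_sqrt_pow2) (simp add: sum_nonneg)
    also have "\<dots> = (\<Sum>j\<in>UNIV. \<Sum>k\<in>UNIV. (A $ k $ j)\<^sup>2)" by (rule sum.swap)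
    finally show ?thesis .
  qed
  have comp: "(transpose A *v v) $ j = (\<chi> k. A $ k $ j) \<bullet> v" for j
    by (simp add: matrix_vector_mult_def transpose_def inner_vec_def mult.commute)
  have "(norm (transpose A *v v))\<^sup>2 = (\<Sum>j\<in>UNIV. ((transpose A *v v) $ j)\<^sup>2)"
    by (simp only: power2_norm_eq_inner inner_vec_def inner_real_def) (simp add: power2_eq_square)
  also have "\<dots> \<le> (\<Sum>j\<in>UNIV. \<Sum>k\<in>UNIV. (A $ k $ j)\<^sup>2)"
  proof (rule sum_mono)
    fix j
    have "((\<chi> k. A $ k $ j) \<bullet> v)\<^sup>2 \<le> ((\<chi> k. A $ k $ j) \<bullet> (\<chi> k. A $ k $ j)) * (v \<bullet> v)"
      using Cauchy_Schwarz_ineq by blast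
    also have "\<dots> = (\<Sum>k\<in>UNIV. (A $ k $ j)\<^sup>2)"
      unfolding vv by (simp add: inner_vec_def power2_eq_square)
    finally show "((transpose A *v v) $ j)\<^sup>2 \<le> (\<Sum>k\<in>UNIV. (A $ k $ j)\<^sup>2)" unfolding comp .
  qed
  finally show ?thesis using fr by simp
qed

lemma small_pos:
  fixes x c :: real
  assumes "\<And>t. t > 0 \<Longrightarrow> x \<le> t * c"
  shows "x \<le> 0"
proof (rule ccontr)
  assume "\<not> x \<le> 0"
  hence x: "x > 0" by simp
  define t where "t = x / (2 * (\<bar>c\<bar> + 1))"
  have t: "t > 0" using x by (simp add: t_def)
  have "t * c \<le> t * \<bar>c\<bar>" using t by (simp add: mult_left_mono)
  also have "\<dots> < x"
  proof -
    have e: "t * \<bar>c\<bar> = x * (\<bar>c\<bar> / (2 * (\<bar>c\<bar> + 1)))" by (simp add: t_def)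
    have "\<bar>c\<bar> / (2 * (\<bar>c\<bar> + 1)) < 1" by (simp add: pos_divide_less_eq)
    hence "x * (\<bar>c\<bar> / (2 * (\<bar>c\<bar> + 1))) < x * 1" using x by (rule mult_strict_left_mono)
    thus ?thesis using e by simp
  qed
  finally show False using assms[OF t] by simp
qed

lemma sym_eig_exists:
  fixes A :: "real^'n^'n"
  assumes sym: "transpose A = A"
  shows "\<exists>e v. v \<noteq> 0 \<and> A *v v = e *\<^sub>R v"
proof -
  define f where "f = (\<lambda>u::real^'n. u \<bullet> (A *v u))"
  have cont: "continuous_on (sphere 0 1) f"
    unfolding f_def by (intro continuous_intros continuous_on_id linear_continuous_on matrix_vector_mul_bounded_linear)
  have ne: "sphere (0::real^'n) 1 \<noteq> {}" by simp
  obtain v where v: "v \<in> sphere 0 1" and vmax: "\<And>y. y \<in> sphere 0 1 \<Longrightarrow> f y \<le> f v"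
    using continuous_attains_sup[OF compact_sphere ne cont] by blast
  have nv: "norm v = 1" using v by simp
  have vv: "v \<bullet> v = 1" using nv by (simp add: norm_eq_1)
  define l where "l = f v"
  have symm: "x \<bullet> (A *v y) = (A *v x) \<bullet> y" for x y
    using inner_mv[of A x y] sym by (simp add: inner_commute)
  have bound: "f u \<le> l * (u \<bullet> u)" if "u \<noteq> 0" for u
  proof -
    have nu: "norm u > 0" using that by simp
    have "(u /\<^sub>R norm u) \<in> sphere 0 1" using nu by simp
    hence "f (u /\<^sub>R norm u) \<le> l" using vmax l_def by simp
    moreover have "f (u /\<^sub>R norm u) = f u / (norm u)\<^sup>2"
      unfolding f_def using nu by (simp add: matrix_vector_mult_scaleR power2_eq_square field_simps)
    ultimately have "f u / (norm u)\<^sup>2 \<le> l" by simp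
    hence "f u \<le> l * (norm u)\<^sup>2" using nu by (simp add: pos_divide_le_eq)
    thus ?thesis by (simp add: power2_norm_eq_inner)
  qed
  define w where "w = A *v v - l *\<^sub>R v"
  have Avv: "(A *v v) \<bullet> v = l" unfolding l_def f_def by (rule inner_commute)
  have wv: "w \<bullet> v = 0" unfolding w_def using vv Avv
    by (simp add: inner_diff_left)
  have vw: "v \<bullet> w = 0" using wv by (simp add: inner_commute)
  have wAv: "w \<bullet> (A *v v) = w \<bullet> w"
  proof -
    have "w \<bullet> w = w \<bullet> (A *v v - l *\<^sub>R v)" by (subst (2) w_def) (rule refl)
    also have "\<dots> = w \<bullet> (A *v v) - l * (w \<bullet> v)" by (simp add: inner_diff_right)
    finally have "w \<bullet> w = w \<bullet> (A *v v) - l * (w \<bullet> v)" .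
    thus ?thesis using wv by simp
  qed
  define c where "c = l * (w \<bullet> w) - w \<bullet> (A *v w)"
  have key: "2 * (w \<bullet> w) \<le> t * c" if t: "t > 0" for t
  proof -
    define u where "u = v + t *\<^sub>R w"
    have uu: "u \<bullet> u = 1 + t\<^sup>2 * (w \<bullet> w)"
      unfolding u_def using vv wv vw
      by (simp add: inner_add_left inner_add_right power2_eq_square)
    have "u \<noteq> 0"
    proof
      assume "u = 0" then have "u \<bullet> u = 0" by simp
      moreover have "t\<^sup>2 * (w \<bullet> w) \<ge> 0" by simp
      ultimately show False using uu by linarith
    qed
    hence b: "f u \<le> l * (u \<bullet> u)" by (rule bound)
    have Au: "A *v u = A *v v + t *\<^sub>R (A *v w)"
      unfolding u_def by (simp add: matrix_vector_right_distrib matrix_vector_mult_scaleR)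
    have vAw: "v \<bullet> (A *v w) = w \<bullet> w"
      using symm[of v w] inner_commute[of "A *v v" w] wAv by simp
    have "f u = v \<bullet> (A *v v) + t * (v \<bullet> (A *v w)) + t * (w \<bullet> (A *v v)) + t\<^sup>2 * (w \<bullet> (A *v w))"
      unfolding f_def Au unfolding u_def
      by (simp add: inner_add_left inner_add_right power2_eq_square algebra_simps)
    also have "\<dots> = l + 2 * t * (w \<bullet> w) + t\<^sup>2 * (w \<bullet> (A *v w))"
      using vAw wAv unfolding l_def f_def by simp
    finally have fu: "f u = l + 2 * t * (w \<bullet> w) + t\<^sup>2 * (w \<bullet> (A *v w))" .
    have "2 * t * (w \<bullet> w) \<le> t\<^sup>2 * c" using b uu fu unfolding c_def by (simp add: algebra_simps)
    hence "t * (2 * (w \<bullet> w)) \<le> t * (t * c)" by (simp add: power2_eq_square algebra_simps)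
    thus ?thesis using t by simp
  qed
  have "2 * (w \<bullet> w) \<le> 0" by (rule small_pos[OF key])
  hence "w \<bullet> w = 0" using inner_ge_zero[of w] by linarith
  hence "w = 0" by simp
  hence "A *v v = l *\<^sub>R v" unfolding w_def by simp
  moreover have "v \<noteq> 0" using nv by auto
  ultimately show ?thesis by blast
qed

lemma sym_eig_finite:
  fixes A :: "real^'n^'n"
  assumes sym: "transpose A = A"
  shows "finite {e. \<exists>v. v \<noteq> 0 \<and> A *v v = e *\<^sub>R v}"
proof -
  define E where "E = {e. \<exists>v. v \<noteq> 0 \<and> A *v v = e *\<^sub>R v}"
  define g where "g e = (SOME v. v \<noteq> 0 \<and> A *v v = e *\<^sub>R v)" for e
  have g: "g e \<noteq> 0 \<and> A *v g e = e *\<^sub>R g e" if "e \<in> E" for e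
  proof -
    have "\<exists>v. v \<noteq> 0 \<and> A *v v = e *\<^sub>R v" using that unfolding E_def by blast
    thus ?thesis unfolding g_def by (rule someI_ex)
  qed
  have symm: "x \<bullet> (A *v y) = (A *v x) \<bullet> y" for x y
    using inner_mv[of A x y] sym by (simp add: inner_commute)
  have inj: "inj_on g E"
  proof (rule inj_onI)
    fix a b assume a: "a \<in> E" and b: "b \<in> E" and e: "g a = g b"
    have "a *\<^sub>R g a = b *\<^sub>R g a" using g[OF a] g[OF b] e by metis
    thus "a = b" using g[OF a] by simp
  qed
  have "pairwise orthogonal (g ` E)"
  proof (rule pairwiseI)
    fix x y assume x: "x \<in> g ` E" and y: "y \<in> g ` E" and ne: "x \<noteq> y"
    obtain a where a: "a \<in> E" and xa: "x = g a" using x by blast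
    obtain b where b: "b \<in> E" and yb: "y = g b" using y by blast
    have "a \<noteq> b" using ne xa yb by blast
    have "a * (x \<bullet> y) = (A *v x) \<bullet> y" using g[OF a] xa by simp
    also have "\<dots> = x \<bullet> (A *v y)" by (simp add: symm)
    also have "\<dots> = b * (x \<bullet> y)" using g[OF b] yb by simp
    finally have "(a - b) * (x \<bullet> y) = 0" by (simp add: algebra_simps)
    thus "orthogonal x y" using \<open>a \<noteq> b\<close> by (simp add: orthogonal_def)
  qed
  hence "finite (g ` E)" by (rule pairwise_orthogonal_imp_finite)
  thus ?thesis using inj finite_imageD unfolding E_def[symmetric] by blast
qed

lemma exists_orth:
  assumes "CARD('p) \<ge> CARD('d)"
  shows "\<exists>Q::real^'p^'d. Q ** transpose Q = mat 1"
proof -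
  obtain f :: "'d \<Rightarrow> 'p" where inj: "inj f"
    using card_le_inj[of "UNIV::'d set" "UNIV::'p set"] assms by auto
  define Q :: "real^'p^'d" where "Q = (\<chi> i j. if j = f i then 1 else 0)"
  have "(Q ** transpose Q) $ i $ k = mat 1 $ i $ k" for i k
  proof -
    have "(Q ** transpose Q) $ i $ k = (\<Sum>j\<in>UNIV. Q $ i $ j * Q $ k $ j)"
      by (simp add: matrix_matrix_mult_def transpose_def)
    also have "\<dots> = (\<Sum>j\<in>UNIV. if j = f i then (if i = k then 1 else 0) else 0)"
      by (rule sum.cong) (auto simp: Q_def inj_eq[OF inj])
    also have "\<dots> = (if i = k then 1 else 0)" by simp
    finally show ?thesis by (simp add: mat_def)
  qed
  thus ?thesis by (auto simp: vec_eq_iff)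
qed

lemma eig_unit:
  fixes M :: "real^'p^'d"
  assumes "e \<in> sq_singular_values M"
  shows "\<exists>v. norm v = 1 \<and> e = (norm (transpose M *v v))\<^sup>2"
proof -
  obtain v where v0: "v \<noteq> 0" and ev: "(M ** transpose M) *v v = e *\<^sub>R v"
    using assms unfolding sq_singular_values_def by blast
  define u where "u = v /\<^sub>R norm v"
  have nu: "norm u = 1" using v0 by (simp add: u_def)
  have eu: "(M ** transpose M) *v u = e *\<^sub>R u"
    unfolding u_def using ev by (simp add: matrix_vector_mult_scaleR scaleR_scaleR mult.commute)
  have "e = e * (u \<bullet> u)" using nu by (simp add: norm_eq_1[symmetric])
  also have "\<dots> = ((M ** transpose M) *v u) \<bullet> u" using eu by simp
  also have "\<dots> = (M *v (transpose M *v u)) \<bullet> u" by (simp only: matrix_vector_mul_assoc)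
  also have "\<dots> = (transpose M *v u) \<bullet> (transpose M *v u)" by (rule inner_mv)
  also have "\<dots> = (norm (transpose M *v u))\<^sup>2" by (simp add: power2_norm_eq_inner)
  finally show ?thesis using nu by blast
qed

lemma upper:
  fixes S :: "nat \<Rightarrow> real^'p^'d"
  assumes "\<forall>i<n. S i ** transpose (S i) = mat 1" and "norm v = 1"
  shows "norm (transpose (\<Sum>i<n. S i) *v v) \<le> real n"
proof -
  have "norm (transpose (\<Sum>i<n. S i) *v v) \<le> (\<Sum>i<n. norm (transpose (S i) *v v))"
    unfolding transpose_sum_mv by (rule norm_sum)
  also have "\<dots> = (\<Sum>i<n. 1)"
  proof (rule sum.cong[OF refl])
    fix i assume "i \<in> {..<n}"
    thus "norm (transpose (S i) *v v) = 1" using iso_norm[of "S i" v] assms by simp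
  qed
  finally show ?thesis by simp
qed

lemma lower:
  fixes S :: "nat \<Rightarrow> real^'p^'d"
  assumes iso: "\<forall>i<n. S i ** transpose (S i) = mat 1" and nv: "norm v = 1"
    and Q: "Q ** transpose Q = mat 1"
  shows "2 * (real n - norm (transpose (\<Sum>i<n. S i) *v v)) \<le> (\<Sum>i<n. (frob (S i - Q))\<^sup>2)"
proof -
  define Y where "Y = transpose Q *v v"
  have nY: "Y \<bullet> Y = 1" using iso_norm[OF Q] nv unfolding Y_def by (simp add: norm_eq_1[symmetric])
  have each: "2 - 2 * ((transpose (S i) *v v) \<bullet> Y) \<le> (frob (S i - Q))\<^sup>2" if i: "i < n" for i
  proof -
    define X where "X = transpose (S i) *v v"
    have nX: "X \<bullet> X = 1" using iso_norm[of "S i" v] iso i nv unfolding X_def by (simp add: norm_eq_1[symmetric])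
    have "(norm (X - Y))\<^sup>2 = X \<bullet> X - 2 * (X \<bullet> Y) + Y \<bullet> Y"
      by (simp add: power2_norm_eq_inner inner_diff_left inner_diff_right inner_commute[of Y X])
    also have "\<dots> = 2 - 2 * (X \<bullet> Y)" using nX nY by simp
    finally have "2 - 2 * (X \<bullet> Y) = (norm (transpose (S i - Q) *v v))\<^sup>2"
      unfolding X_def Y_def transpose_diff_mv by simp
    also have "\<dots> \<le> (frob (S i - Q))\<^sup>2" by (rule frob_bound[OF nv])
    finally show ?thesis unfolding X_def .
  qed
  have "(\<Sum>i<n. 2 - 2 * ((transpose (S i) *v v) \<bullet> Y)) = 2 * real n - 2 * ((transpose (\<Sum>i<n. S i) *v v) \<bullet> Y)"
    unfolding transpose_sum_mv
    by (simp add: sum_subtractf sum_distrib_left[symmetric] inner_sum_left del: transpose_matrix_vector)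
  moreover have "(transpose (\<Sum>i<n. S i) *v v) \<bullet> Y \<le> norm (transpose (\<Sum>i<n. S i) *v v)"
  proof -
    have "norm Y = 1" using nY by (simp add: norm_eq_1)
    thus ?thesis using norm_cauchy_schwarz[of "transpose (\<Sum>i<n. S i) *v v" Y] by simp
  qed
  moreover have "(\<Sum>i<n. 2 - 2 * ((transpose (S i) *v v) \<bullet> Y)) \<le> (\<Sum>i<n. (frob (S i - Q))\<^sup>2)"
    using each by (intro sum_mono) auto
  ultimately show ?thesis by argo
qed

lemma arith_aux:
  fixes r a d q n :: real
  assumes "2 * r \<le> a * (d / n) * q" and "n > 0"
  shows "r \<le> a * d * q / (2 * n)"
proof -
  have "a * (d / n) * q = (a * d * q) / n" by simp
  hence "2 * r \<le> (a * d * q) / n" using assms(1) by simp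
  hence "2 * r * n \<le> a * d * q" using assms(2) by (simp add: le_divide_eq)
  thus ?thesis using assms(2) by (simp add: le_divide_eq mult.commute mult.left_commute)
qed

theorem lemma4:
  fixes n :: nat and \<delta> :: real
    and \<Delta> :: "real^'k^'k"
    and S :: "nat \<Rightarrow> real^'p^'d"
  assumes "n \<ge> 1"
    and "CARD('p) \<ge> CARD('d)"
    and "CARD('k) = n * CARD('d)"
    and "\<delta> > 0"
    and "\<forall>i<n. S i ** transpose (S i) = mat 1"
    and "dF n S \<le> \<delta> * sqrt (real CARD('d) / real n) * onorm (\<lambda>x. \<Delta> *v x)"
  shows "real n \<ge> sigma_max (\<Sum>i<n. S i)
    \<and> sigma_max (\<Sum>i<n. S i) \<ge> sigma_min (\<Sum>i<n. S i)
    \<and> sigma_min (\<Sum>i<n. S i) \<ge>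
        real n - \<delta>\<^sup>2 * real CARD('d) * (onorm (\<lambda>x. \<Delta> *v x))\<^sup>2 / (2 * real n)"
proof -
  define M where "M = (\<Sum>i<n. S i)"
  define B where "B = \<delta> * sqrt (real CARD('d) / real n) * onorm (\<lambda>x. \<Delta> *v x)"
  define L where "L = real n - \<delta>\<^sup>2 * real CARD('d) * (onorm (\<lambda>x. \<Delta> *v x))\<^sup>2 / (2 * real n)"
  have iso: "\<forall>i<n. S i ** transpose (S i) = mat 1" by fact
  have n0: "real n > 0" using assms(1) by simp
  have symA: "transpose (M ** transpose M) = M ** transpose M"
    by (simp add: matrix_transpose_mul)
  have Eeq: "sq_singular_values M = {e. \<exists>v. v \<noteq> 0 \<and> (M ** transpose M) *v v = e *\<^sub>R v}"
    unfolding sq_singular_values_def by simp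
  have finE: "finite (sq_singular_values M)"
    unfolding Eeq by (rule sym_eig_finite[OF symA])
  have neE: "sq_singular_values M \<noteq> {}"
    unfolding Eeq using sym_eig_exists[OF symA] by blast
  have fin: "finite (singular_values M)" unfolding singular_values_def using finE by simp
  have ne: "singular_values M \<noteq> {}" unfolding singular_values_def using neE by simp
  define G where "G = {sqrt (\<Sum>i<n. (frob (S i - Q))\<^sup>2) | Q. Q ** transpose Q = mat 1}"
  have dFG: "dF n S = Inf G" unfolding dF_def G_def by simp
  have neG: "G \<noteq> {}" using exists_orth[OF assms(2)] unfolding G_def by blast
  have dF0: "dF n S \<ge> 0" unfolding dFG
    by (rule cInf_greatest[OF neG]) (auto simp: G_def sum_nonneg)
  have dFB: "dF n S \<le> B" using assms(6) unfolding B_def .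
  have B2: "B\<^sup>2 = \<delta>\<^sup>2 * (real CARD('d) / real n) * (onorm (\<lambda>x. \<Delta> *v x))\<^sup>2"
    unfolding B_def by (simp add: power_mult_distrib)
  have dF2: "(dF n S)\<^sup>2 \<le> B\<^sup>2" using dF0 dFB by (simp add: power_mono)
  have bnd: "sqrt e \<le> real n \<and> L \<le> sqrt e" if e: "e \<in> sq_singular_values M" for e
  proof -
    obtain v where nv: "norm v = 1" and ev: "e = (norm (transpose M *v v))\<^sup>2"
      using eig_unit[OF e] by blast
    have se: "sqrt e = norm (transpose M *v v)" using ev by simp
    have up: "sqrt e \<le> real n" unfolding se M_def by (rule upper[OF iso nv])
    have "L \<le> sqrt e"
    proof (cases "real n - sqrt e \<le> 0")
      case True
      have "\<delta>\<^sup>2 * real CARD('d) * (onorm (\<lambda>x. \<Delta> *v x))\<^sup>2 / (2 * real n) \<ge> 0"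
        using n0 by simp
      thus ?thesis using True unfolding L_def by linarith
    next
      case False
      define r where "r = real n - sqrt e"
      have r: "r > 0" using False r_def by simp
      have "sqrt (2 * r) \<le> Inf G"
      proof (rule cInf_greatest[OF neG])
        fix x assume "x \<in> G"
        then obtain Q where Q: "Q ** transpose Q = mat 1" and x: "x = sqrt (\<Sum>i<n. (frob (S i - Q))\<^sup>2)"
          unfolding G_def by blast
        have "2 * r \<le> (\<Sum>i<n. (frob (S i - Q))\<^sup>2)"
          using lower[OF iso nv Q] unfolding r_def se M_def .
        thus "sqrt (2 * r) \<le> x" unfolding x by simp
      qed
      hence "sqrt (2 * r) \<le> dF n S" using dFG by simp
      hence "(sqrt (2 * r))\<^sup>2 \<le> (dF n S)\<^sup>2" by (rule power_mono) (use r in simp)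
      hence "2 * r \<le> B\<^sup>2" using r dF2 by simp
      hence "r \<le> \<delta>\<^sup>2 * real CARD('d) * (onorm (\<lambda>x. \<Delta> *v x))\<^sup>2 / (2 * real n)"
        using arith_aux[OF _ n0] unfolding B2 by blast
      thus ?thesis unfolding L_def r_def by linarith
    qed
    with up show ?thesis by blast
  qed
  have maxin: "sigma_max M \<in> singular_values M" unfolding sigma_max_def using fin ne by (rule Max_in)
  have minin: "sigma_min M \<in> singular_values M" unfolding sigma_min_def using fin ne by (rule Min_in)
  have "sigma_max M \<le> real n"
  proof -
    obtain e where e: "e \<in> sq_singular_values M" and s: "sigma_max M = sqrt e"
      using maxin unfolding singular_values_def by blast
    have "sqrt e \<le> real n" using bnd[OF e] by blast
    thus ?thesis unfolding s .
  qed
  moreover have "sigma_min M \<le> sigma_max M"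
    unfolding sigma_min_def using fin maxin by (rule Min_le)
  moreover have "L \<le> sigma_min M"
  proof -
    obtain e where e: "e \<in> sq_singular_values M" and s: "sigma_min M = sqrt e"
      using minin unfolding singular_values_def by blast
    have "L \<le> sqrt e" using bnd[OF e] by blast
    thus ?thesis unfolding s .
  qed
  ultimately show ?thesis unfolding M_def[symmetric] L_def[symmetric] by (intro conjI)
qed

end
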